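(* Fix a trial $r$ and assume the surrogate satisfies causal necessity in trial $r$, i.e. $ACE_{ss,r}=ACE_{\bar{s}\bar{s},r}=0$. (i) Under monotonicity ($P(U=\bar{s}s\mid R=r)=0$) and $\pi_{s\bar{s},r}>0$: $ACE^Y_r=ACE^S_r\times ACE_{s\bar{s},r}$. (ii) Without monotonicity, assume $\pi_{s\bar{s},r}>0$, $\pi_{\bar{s}s,r}>0$ and $ACE^S_r>0$. If $ACE_{s\bar{s},r}+ACE_{\bar{s}s,r}\ge 0$, then $$ACE^S_r\, ACE_{s\bar{s},r}\le ACE^Y_r\le \tfrac12(ACE_{s\bar{s},r}+ACE_{\bar{s}s,r})+\tfrac12 ACE^S_r\,(ACE_{s\bar{s},r}-ACE_{\bar{s}s,r}),$$ and otherwise $$\tfrac12(ACE_{s\bar{s},r}+ACE_{\bar{s}s,r})+\tfrac12 ACE^S_r\,(ACE_{s\bar{s},r}-ACE_{\bar{s}s,r})\le ACE^Y_r\le ACE^S_r\, ACE_{s\bar{s},r}.$$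
   Context: A unit has trial $R$, treatment $Z\in\{0,1\}$, and binary potential surrogate and endpoint $S(z),Y(z)$, $z=0,1$. $U=(S(1),S(0))$ with values $(1,1),(1,0),(0,1),(0,0)$ labeled $ss,s\bar{s},\bar{s}s,\bar{s}\bar{s}$; $\pi_{ur}=P(U=u\mid R=r)$. For strata with $\pi_{ur}>0$, $ACE_{ur}=E\{Y(1)-Y(0)\mid U=u,R=r\}$; causal necessity is understood as $E\{(Y(1)-Y(0))1\{U=u\}\mid R=r\}=0$ for $u=ss,\bar{s}\bar{s}$ (equivalently $ACE_{ur}=0$ whenever $\pi_{ur}>0$). $ACE^S_r=E\{S(1)-S(0)\mid R=r\}$ and $ACE^Y_r=E\{Y(1)-Y(0)\mid R=r\}$. *)

theory Defs
  imports "HOL-Probability.Probability"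
begin

definition cond_ev_exp :: "'a measure \<Rightarrow> 'a set \<Rightarrow> ('a \<Rightarrow> real) \<Rightarrow> real" where
  "cond_ev_exp M A X = (\<integral>w. indicator A w * X w \<partial>M) / measure M A"

definition trial_ev :: "'a measure \<Rightarrow> ('a \<Rightarrow> 'r) \<Rightarrow> 'r \<Rightarrow> 'a set" where
  "trial_ev M R r = {w \<in> space M. R w = r}"

text \<open>Principal stratum U = (S(1), S(0)); True = s, False = s-bar.\<close>
definition stratum_ev :: "'a measure \<Rightarrow> ('a \<Rightarrow> 'r) \<Rightarrow> ('a \<Rightarrow> bool) \<Rightarrow> ('a \<Rightarrow> bool) \<Rightarrow> bool \<times> bool \<Rightarrow> 'r \<Rightarrow> 'a set" where
  "stratum_ev M R S1 S0 u r = {w \<in> space M. R w = r \<and> (S1 w, S0 w) = u}"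

definition pi_s :: "'a measure \<Rightarrow> ('a \<Rightarrow> 'r) \<Rightarrow> ('a \<Rightarrow> bool) \<Rightarrow> ('a \<Rightarrow> bool) \<Rightarrow> bool \<times> bool \<Rightarrow> 'r \<Rightarrow> real" where
  "pi_s M R S1 S0 u r = measure M (stratum_ev M R S1 S0 u r) / measure M (trial_ev M R r)"

definition ACE_stratum :: "'a measure \<Rightarrow> ('a \<Rightarrow> 'r) \<Rightarrow> ('a \<Rightarrow> bool) \<Rightarrow> ('a \<Rightarrow> bool) \<Rightarrow> ('a \<Rightarrow> bool) \<Rightarrow> ('a \<Rightarrow> bool) \<Rightarrow> bool \<times> bool \<Rightarrow> 'r \<Rightarrow> real" where
  "ACE_stratum M R S1 S0 Y1 Y0 u r =
     cond_ev_exp M (stratum_ev M R S1 S0 u r) (\<lambda>w. of_bool (Y1 w) - of_bool (Y0 w))"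

definition ACE_S :: "'a measure \<Rightarrow> ('a \<Rightarrow> 'r) \<Rightarrow> ('a \<Rightarrow> bool) \<Rightarrow> ('a \<Rightarrow> bool) \<Rightarrow> 'r \<Rightarrow> real" where
  "ACE_S M R S1 S0 r = cond_ev_exp M (trial_ev M R r) (\<lambda>w. of_bool (S1 w) - of_bool (S0 w))"

definition ACE_Y :: "'a measure \<Rightarrow> ('a \<Rightarrow> 'r) \<Rightarrow> ('a \<Rightarrow> bool) \<Rightarrow> ('a \<Rightarrow> bool) \<Rightarrow> 'r \<Rightarrow> real" where
  "ACE_Y M R Y1 Y0 r = cond_ev_exp M (trial_ev M R r) (\<lambda>w. of_bool (Y1 w) - of_bool (Y0 w))"

definition causal_necessity :: "'a measure \<Rightarrow> ('a \<Rightarrow> 'r) \<Rightarrow> ('a \<Rightarrow> bool) \<Rightarrow> ('a \<Rightarrow> bool) \<Rightarrow> ('a \<Rightarrow> bool) \<Rightarrow> ('a \<Rightarrow> bool) \<Rightarrow> 'r \<Rightarrow> bool" where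
  "causal_necessity M R S1 S0 Y1 Y0 r \<longleftrightarrow>
     (\<forall>u \<in> {(True, True), (False, False)}.
        cond_ev_exp M (trial_ev M R r)
          (\<lambda>w. (of_bool (Y1 w) - of_bool (Y0 w)) * of_bool ((S1 w, S0 w) = u)) = 0)"

end

theory Submission
  imports Defs
begin

lemma bool_meas:
  assumes "S \<in> measurable M (count_space UNIV)"
  shows "(\<lambda>w. of_bool (S w) :: real) \<in> borel_measurable M"
  using measurable_compose[OF assms, of "\<lambda>b. of_bool b :: real" borel] by simp

lemma strat_sets:
  assumes "{w \<in> space M. R w = r} \<in> sets M"
    and "S1 \<in> measurable M (count_space UNIV)" and "S0 \<in> measurable M (count_space UNIV)"
  shows "stratum_ev M R S1 S0 u r \<in> sets M"
proof -
  have "stratum_ev M R S1 S0 u r = {w \<in> space M. R w = r} \<inter> (S1 -` {fst u} \<inter> space M) \<inter> (S0 -` {snd u} \<inter> space M)"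
    unfolding stratum_ev_def by (cases u) auto
  moreover have "S1 -` {fst u} \<inter> space M \<in> sets M" using measurable_sets[OF assms(2)] by simp
  moreover have "S0 -` {snd u} \<inter> space M \<in> sets M" using measurable_sets[OF assms(3)] by simp
  ultimately show ?thesis using assms(1) by auto
qed

lemma arith2:
  fixes x z a b s y :: real
  assumes "x \<ge> 0" "z \<ge> 0" "x + z \<le> 1" "s = x - z" "y = x * a + z * b"
  shows "if a + b \<ge> 0
           then s * a \<le> y \<and> y \<le> (a + b) / 2 + s * (a - b) / 2
           else (a + b) / 2 + s * (a - b) / 2 \<le> y \<and> y \<le> s * a"
proof -
  have e1: "y - s * a = z * (a + b)" unfolding assms(4,5) by (simp add: algebra_simps)
  have e2: "(a + b) / 2 + s * (a - b) / 2 - y = (1 - x - z) / 2 * (a + b)" unfolding assms(4,5) by (simp add: field_simps)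
  have h: "1 - x - z \<ge> 0" using assms by simp
  show ?thesis
  proof (cases "a + b \<ge> 0")
    case True
    have "z * (a + b) \<ge> 0" using True assms by simp
    moreover have "(1 - x - z) / 2 * (a + b) \<ge> 0" using True h by simp
    ultimately show ?thesis using True e1 e2 by (simp only: if_True) linarith
  next
    case False
    have "z * (a + b) \<le> 0" using False assms by (simp add: mult_nonneg_nonpos)
    moreover have "(1 - x - z) / 2 * (a + b) \<le> 0" using False h by (simp add: mult_nonneg_nonpos)
    ultimately show ?thesis using False e1 e2 by (simp only: if_False) linarith
  qed
qed

theorem proposition3:
  fixes M :: "'a measure" and R :: "'a \<Rightarrow> 'r" and r :: 'r
    and S1 S0 Y1 Y0 :: "'a \<Rightarrow> bool"
  assumes "prob_space M"
    and "{w \<in> space M. R w = r} \<in> sets M"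
    and "S1 \<in> measurable M (count_space UNIV)" and "S0 \<in> measurable M (count_space UNIV)"
    and "Y1 \<in> measurable M (count_space UNIV)" and "Y0 \<in> measurable M (count_space UNIV)"
    and "causal_necessity M R S1 S0 Y1 Y0 r"
  shows
    "(pi_s M R S1 S0 (False, True) r = 0 \<and> pi_s M R S1 S0 (True, False) r > 0 \<longrightarrow>
        ACE_Y M R Y1 Y0 r = ACE_S M R S1 S0 r * ACE_stratum M R S1 S0 Y1 Y0 (True, False) r)
     \<and>
     (pi_s M R S1 S0 (True, False) r > 0 \<and> pi_s M R S1 S0 (False, True) r > 0
        \<and> ACE_S M R S1 S0 r > 0 \<longrightarrow>
       (let a = ACE_stratum M R S1 S0 Y1 Y0 (True, False) r;
            b = ACE_stratum M R S1 S0 Y1 Y0 (False, True) r;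
            s = ACE_S M R S1 S0 r;
            y = ACE_Y M R Y1 Y0 r
        in if a + b \<ge> 0
           then s * a \<le> y \<and> y \<le> (a + b) / 2 + s * (a - b) / 2
           else (a + b) / 2 + s * (a - b) / 2 \<le> y \<and> y \<le> s * a))"
proof -
  interpret prob_space M by fact
  define T where "T = trial_ev M R r"
  define A where "A u = stratum_ev M R S1 S0 u r" for u
  define D where "D w = (of_bool (Y1 w) - of_bool (Y0 w) :: real)" for w
  define I where "I u = (\<integral>w. indicator (A u) w * D w \<partial>M)" for u
  define p where "p = measure M T"
  have Tm: "T \<in> sets M" using assms(2) by (simp add: T_def trial_ev_def)
  have Am: "A u \<in> sets M" for u using strat_sets[OF assms(2-4)] by (simp add: A_def)
  have Dm: "D \<in> borel_measurable M" unfolding D_def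
    using bool_meas[OF assms(5)] bool_meas[OF assms(6)] by measurable
  have Dint: "integrable M (\<lambda>w. indicator X w * D w)" if "X \<in> sets M" for X
    apply (rule integrable_const_bound[where B=1])
     apply (auto simp: D_def indicator_def)[1]
    using Dm that by measurable
  let ?u1 = "(True,True)" and ?u2 = "(True,False)" and ?u3 = "(False,True)" and ?u4 = "(False,False)"
  have ptw: "indicator T w = indicator (A ?u1) w + indicator (A ?u2) w + indicator (A ?u3) w + (indicator (A ?u4) w :: real)" for w
    by (auto simp: T_def A_def trial_ev_def stratum_ev_def indicator_def)
  have disj: "A ?u1 \<inter> A ?u2 = {}" "A ?u1 \<inter> A ?u3 = {}" "A ?u1 \<inter> A ?u4 = {}"
    "A ?u2 \<inter> A ?u3 = {}" "A ?u2 \<inter> A ?u4 = {}" "A ?u3 \<inter> A ?u4 = {}"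
    by (auto simp: A_def stratum_ev_def)
  have Tun: "T = A ?u1 \<union> A ?u2 \<union> A ?u3 \<union> A ?u4"
    by (auto simp: T_def A_def trial_ev_def stratum_ev_def)
  have pT: "p = measure M (A ?u1) + measure M (A ?u2) + measure M (A ?u3) + measure M (A ?u4)"
    unfolding p_def Tun using disj Am
    by (subst finite_measure_Union, auto intro!: finite_measure_Union)+
  have IT: "(\<integral>w. indicator T w * D w \<partial>M) = I ?u1 + I ?u2 + I ?u3 + I ?u4"
  proof -
    have "(\<integral>w. indicator T w * D w \<partial>M) = (\<integral>w. indicator (A ?u1) w * D w + indicator (A ?u2) w * D w + indicator (A ?u3) w * D w + indicator (A ?u4) w * D w \<partial>M)"
      by (rule Bochner_Integration.integral_cong) (auto simp: ptw algebra_simps)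
    also have "\<dots> = I ?u1 + I ?u2 + I ?u3 + I ?u4"
      unfolding I_def using Dint[OF Am] by simp
    finally show ?thesis .
  qed
  have ST: "(\<integral>w. indicator T w * (of_bool (S1 w) - of_bool (S0 w) :: real) \<partial>M) = measure M (A ?u2) - measure M (A ?u3)"
  proof -
    have "(\<integral>w. indicator T w * (of_bool (S1 w) - of_bool (S0 w) :: real) \<partial>M) = (\<integral>w. indicator (A ?u2) w - indicator (A ?u3) w \<partial>M)"
      by (rule Bochner_Integration.integral_cong) (auto simp: T_def A_def trial_ev_def stratum_ev_def indicator_def split: if_splits)
    also have "\<dots> = measure M (A ?u2) - measure M (A ?u3)"
      using Am[of ?u2] Am[of ?u3] by (subst Bochner_Integration.integral_diff) (auto intro!: integrable_real_indicator simp: less_top[symmetric])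
    finally show ?thesis .
  qed
  have CN: "I ?u1 / p = 0" "I ?u4 / p = 0"
  proof -
    have "(\<integral>w. indicator T w * ((of_bool (Y1 w) - of_bool (Y0 w)) * of_bool ((S1 w, S0 w) = u)) \<partial>M) = I u" for u
      unfolding I_def
      by (rule Bochner_Integration.integral_cong) (auto simp: T_def A_def D_def trial_ev_def stratum_ev_def indicator_def)
    then show "I ?u1 / p = 0" "I ?u4 / p = 0" using assms(7)
      by (auto simp: causal_necessity_def cond_ev_exp_def T_def p_def)
  qed
  have pis: "pi_s M R S1 S0 u r = measure M (A u) / p" for u
    by (simp add: pi_s_def A_def p_def T_def)
  have aces: "ACE_stratum M R S1 S0 Y1 Y0 u r = I u / measure M (A u)" for u
    by (simp add: ACE_stratum_def cond_ev_exp_def A_def I_def D_def)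
  have aceS: "ACE_S M R S1 S0 r = (measure M (A ?u2) - measure M (A ?u3)) / p"
    using ST by (simp add: ACE_S_def cond_ev_exp_def T_def p_def)
  have aceY: "ACE_Y M R Y1 Y0 r = (I ?u1 + I ?u2 + I ?u3 + I ?u4) / p"
    using IT by (simp add: ACE_Y_def cond_ev_exp_def T_def p_def D_def)
  have nn: "measure M (A u) \<ge> 0" for u by simp
  have ppos: "p > 0" if "pi_s M R S1 S0 u r > 0" for u
  proof -
    have "p \<noteq> 0" using that by (auto simp: pis)
    moreover have "p \<ge> 0" by (simp add: p_def)
    ultimately show ?thesis by simp
  qed
  show ?thesis
  proof (intro conjI impI)
    assume h: "pi_s M R S1 S0 (False, True) r = 0 \<and> 0 < pi_s M R S1 S0 (True, False) r"
    have p0: "p > 0" using h ppos by blast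
    have m3: "measure M (A ?u3) = 0" using h p0 by (simp add: pis)
    have m2: "measure M (A ?u2) > 0" using h p0 by (simp add: pis zero_less_divide_iff)
    have I3: "I ?u3 = 0"
    proof -
      have "A ?u3 \<in> null_sets M" using m3 Am[of ?u3] by (simp add: emeasure_eq_measure null_sets_def)
      then have "AE w in M. indicator (A ?u3) w * D w = 0"
        by (rule AE_mp[OF AE_not_in]) (auto intro!: AE_I2)
      then show ?thesis unfolding I_def by (simp add: integral_eq_zero_AE)
    qed
    have I1: "I ?u1 = 0" "I ?u4 = 0" using CN p0 by auto
    show "ACE_Y M R Y1 Y0 r = ACE_S M R S1 S0 r * ACE_stratum M R S1 S0 Y1 Y0 (True, False) r"
      using m2 p0 by (simp add: aceY aceS aces I1 I3 m3)
  next
    assume h: "0 < pi_s M R S1 S0 (True, False) r \<and> 0 < pi_s M R S1 S0 (False, True) r \<and> 0 < ACE_S M R S1 S0 r"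
    have p0: "p > 0" using h ppos by blast
    have m2: "measure M (A ?u2) > 0" using h p0 by (simp add: pis zero_less_divide_iff)
    have m3: "measure M (A ?u3) > 0" using h p0 by (simp add: pis zero_less_divide_iff)
    have I1: "I ?u1 = 0" "I ?u4 = 0" using CN p0 by auto
    define x where "x = measure M (A ?u2) / p"
    define z where "z = measure M (A ?u3) / p"
    have "x + z \<le> 1" using pT p0 nn[of ?u1] nn[of ?u4]
      by (simp add: x_def z_def divide_simps)
    moreover have "x \<ge> 0" "z \<ge> 0" using m2 m3 p0 by (simp_all add: x_def z_def)
    moreover have "ACE_S M R S1 S0 r = x - z" by (simp add: aceS x_def z_def diff_divide_distrib)
    moreover have "ACE_Y M R Y1 Y0 r = x * ACE_stratum M R S1 S0 Y1 Y0 (True, False) r + z * ACE_stratum M R S1 S0 Y1 Y0 (False, True) r"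
      using m2 m3 p0 by (simp add: aceY aces I1 x_def z_def add_divide_distrib)
    ultimately show "let a = ACE_stratum M R S1 S0 Y1 Y0 (True, False) r;
            b = ACE_stratum M R S1 S0 Y1 Y0 (False, True) r;
            s = ACE_S M R S1 S0 r;
            y = ACE_Y M R Y1 Y0 r
        in if a + b \<ge> 0
           then s * a \<le> y \<and> y \<le> (a + b) / 2 + s * (a - b) / 2
           else (a + b) / 2 + s * (a - b) / 2 \<le> y \<and> y \<le> s * a"
      unfolding Let_def by (metis arith2)
  qed
qed

end
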